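(* Let $k>0$, $d\ge 0$, $a>0$. Suppose that for some $\lambda>0$ $$\frac{a}{k}>\left[1+\frac{k}{\frac{k\lambda}{\arctan(k\lambda)}-1}\right](1+d\lambda^2).$$ Then there exists a real number $\mu>0$ satisfying the dispersion relation $$\frac12\int_{-1}^{1}\frac{1-k+\mathrm{i}\,\frac{a\lambda s}{1+d\lambda^2}}{1+k\mu+\mathrm{i}k\lambda s}\,ds=1 .$$ Equivalently, the linearized system (L) has a nonzero solution $g(x,\mathbf v)=\hat g(\mathbf v)e^{\mathrm{i}\lambda x}$, $S_g=\hat Se^{\mathrm{i}\lambda x}$ with a real growth rate $\mu>0$. Consequently, if $a/k$ exceeds the infimum over $\lambda>0$ of the right-hand side above, then the constant state $f\equiv S\equiv 1$ of the kinetic chemotaxis system is linearly unstable. Moreover, the displayed inequality forces $\beta:=\frac{a}{k(1+d\lambda^2)}>1$, that is, $0<\lambda<\sqrt{(a/k-1)/d}$ when $d>0$.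
   Context: Let $S^2\subset\mathbb{R}^3$ be the unit sphere, with surface measure $d\Omega$ (total mass $4\pi$). Write $\mathbf{v}=(v_1,v_2,v_3)\in S^2$ and $x\in\mathbb{R}$. Fix parameters $k>0$ (scaled mean run time), $d\ge0$ (diffusion coefficient), and $a=F'(0)>0$ (stiffness of the chemotactic response function $F$ at $0$). The linearized system (L), for the unknowns $g(x,\mathbf v)$ and $S_g(x)$ and a growth rate $\mu\in\mathbb{C}$, is $$k\big(\mu g+v_1\partial_x g\big)=\rho_g+a\,v_1\partial_x S_g-g-k\rho_g,\qquad -d\,\partial_{xx}S_g+S_g=\rho_g,\qquad \rho_g(x)=\frac1{4\pi}\int_{S^2}g(x,\mathbf v)\,d\Omega(\mathbf v).$$ This system is the linearization, around the constant state $f\equiv S\equiv\rho\equiv1$ with perturbations proportional to $e^{\mu t}$, of the kinetic chemotaxis system $$\partial_t f+v_1\partial_x f=\frac1k\Big\{\frac1{4\pi}\int_{S^2}K[D_t\log S|_{\mathbf v'}]f(\mathbf v')\,d\Omega(\mathbf v')-K[D_t\log S|_{\mathbf v}]f(\mathbf v)\Big\}+P[\rho]f ,$$ $$-d\,\partial_{xx}S+S=\rho,\qquad \rho=\frac1{4\pi}\int_{S^2} f\,d\Omega .$$ Here: - $K[X]=1-F[X]$, where $F$ is smooth and increasing with $F(0)=0$ and $F(X)\to\pm\chi$ as $X\to\pm\infty$, for some $0\le\chi<1$; - $D_t X|_{\mathbf v}=\partial_t X+v_1\partial_x X$; - $P$ satisfies $P(1)=0$ and $P'(1)=-1$. "Linearly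 unstable" means that (L) has a nonzero solution of the form $\hat g(\mathbf v)e^{\mathrm{i}\lambda x}$ with $\mathrm{Re}\,\mu>0$. *)

theory Defs
  imports "HOL-Analysis.Analysis"
begin

text \<open>Spherical-coordinate parametrisation of the unit sphere S^2 in R^3
  (polar angle th in [0,pi], azimuth ph in [0,2 pi]); the surface measure is
  sin th d th d ph.\<close>
definition sph :: "real \<Rightarrow> real \<Rightarrow> real^3" where
  "sph th ph = vector [sin th * cos ph, sin th * sin ph, cos th]"

definition sphere_integrable :: "(real^3 \<Rightarrow> complex) \<Rightarrow> bool" where
  "sphere_integrable f \<longleftrightarrow>
     (\<forall>th\<in>{0..pi}. (\<lambda>ph. f (sph th ph)) integrable_on {0..2*pi}) \<and>
     (\<lambda>th. complex_of_real (sin th) * integral {0..2*pi} (\<lambda>ph. f (sph th ph))) integrable_on {0..pi}"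

definition sphere_avg :: "(real^3 \<Rightarrow> complex) \<Rightarrow> complex" where
  "sphere_avg f = complex_of_real (1 / (4*pi)) *
     integral {0..pi} (\<lambda>th. complex_of_real (sin th) * integral {0..2*pi} (\<lambda>ph. f (sph th ph)))"

text \<open>The linearized system (L) with growth rate mu, for unknowns g(x,v) and S_g(x).
  Derivatives in x are classical derivatives of complex-valued functions of x.\<close>
definition L_solution ::
  "real \<Rightarrow> real \<Rightarrow> real \<Rightarrow> complex \<Rightarrow> (real \<Rightarrow> real^3 \<Rightarrow> complex) \<Rightarrow> (real \<Rightarrow> complex) \<Rightarrow> bool" where
  "L_solution k d a \<mu> g Sg \<longleftrightarrow>
     (\<forall>x. sphere_integrable (g x)) \<and>
     (\<forall>v\<in>sphere 0 1. \<forall>x. (\<lambda>y. g y v) differentiable (at x)) \<and>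
     (\<forall>x. Sg differentiable (at x)) \<and>
     (\<forall>x. (\<lambda>y. vector_derivative Sg (at y)) differentiable (at x)) \<and>
     (\<forall>x. \<forall>v\<in>sphere 0 1.
        complex_of_real k * (\<mu> * g x v + complex_of_real (v$1) * vector_derivative (\<lambda>y. g y v) (at x))
        = sphere_avg (g x) + complex_of_real a * complex_of_real (v$1) * vector_derivative Sg (at x)
          - g x v - complex_of_real k * sphere_avg (g x)) \<and>
     (\<forall>x. - complex_of_real d * vector_derivative (\<lambda>y. vector_derivative Sg (at y)) (at x) + Sg x
          = sphere_avg (g x))"

definition fourier_solution :: "real \<Rightarrow> real \<Rightarrow> real \<Rightarrow> real \<Rightarrow> complex \<Rightarrow> bool" where
  "fourier_solution k d a lam \<mu> \<longleftrightarrow>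
     (\<exists>gh Sh. (\<exists>v\<in>sphere 0 1. gh v \<noteq> 0) \<and>
        L_solution k d a \<mu> (\<lambda>x v. gh v * exp (\<i> * complex_of_real (lam * x)))
                            (\<lambda>x. Sh * exp (\<i> * complex_of_real (lam * x))))"

definition linearly_unstable :: "real \<Rightarrow> real \<Rightarrow> real \<Rightarrow> bool" where
  "linearly_unstable k d a \<longleftrightarrow> (\<exists>lam \<mu>. Re \<mu> > 0 \<and> fourier_solution k d a lam \<mu>)"

definition dispersion :: "real \<Rightarrow> real \<Rightarrow> real \<Rightarrow> real \<Rightarrow> real \<Rightarrow> bool" where
  "dispersion k d a lam \<mu> \<longleftrightarrow>
     complex_of_real (1/2) * integral {-1..1}
       (\<lambda>s. (complex_of_real (1 - k) + \<i> * complex_of_real (a * lam * s / (1 + d * lam^2)))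
            / (complex_of_real (1 + k * \<mu>) + \<i> * complex_of_real (k * lam * s))) = 1"

definition instab_rhs :: "real \<Rightarrow> real \<Rightarrow> real \<Rightarrow> real" where
  "instab_rhs k d lam = (1 + k / (k * lam / arctan (k * lam) - 1)) * (1 + d * lam^2)"

end

theory Submission
  imports Defs
begin

lemma arctan_lt: assumes "0 < x" shows "arctan x < x"
proof -
  have "(\<lambda>t. t - arctan t) 0 < (\<lambda>t. t - arctan t) x"
  proof (rule DERIV_pos_imp_increasing_open[OF assms])
    fix t :: real assume t: "0 < t" "t < x"
    show "\<exists>y. ((\<lambda>t. t - arctan t) has_real_derivative y) (at t) \<and> 0 < y"
    proof (rule exI[of _ "1 - inverse (1 + t^2)"], intro conjI)
      show "((\<lambda>t. t - arctan t) has_real_derivative 1 - inverse (1 + t^2)) (at t)"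
        by (auto intro!: derivative_eq_intros)
      have "inverse (1 + t^2) < 1" using t by (intro inverse_less_1_iff[THEN iffD2]) auto
      then show "0 < 1 - inverse (1 + t^2)" by simp
    qed
  next
    show "continuous_on {0..x} (\<lambda>t. t - arctan t)" by (intro continuous_intros)
  qed
  then show ?thesis by simp
qed
lemma arctan_lb: assumes "0 \<le> x" shows "x - x^3/3 \<le> arctan x"
proof -
  have "(\<lambda>t. arctan t - t + t^3/3) 0 \<le> (\<lambda>t. arctan t - t + t^3/3) x"
  proof (rule DERIV_nonneg_imp_nondecreasing[OF assms])
    fix t :: real assume t: "0 \<le> t" "t \<le> x"
    have "0 \<le> inverse (1 + t^2) - 1 + t^2"
    proof -
      have "inverse (1 + t^2) - 1 + t^2 = t^4 / (1+t^2)"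
      proof -
        have p: "1 + t^2 > 0" by (simp add: add_pos_nonneg)
        show ?thesis using p by (simp add: field_simps)
      qed
      then show ?thesis by simp
    qed
    then show "\<exists>y. ((\<lambda>t. arctan t - t + t^3/3) has_real_derivative y) (at t) \<and> 0 \<le> y"
      by (intro exI[of _ "inverse (1 + t^2) - 1 + t^2"]) (auto intro!: derivative_eq_intros simp: power2_eq_square)
  qed
  then show ?thesis by simp
qed

lemma ftc_complex:
  fixes a b :: real
  assumes "a \<le> b"
    and "\<And>x. x \<in> {a..b} \<Longrightarrow> (\<phi> has_real_derivative \<phi>' x) (at x)"
    and "\<And>x. x \<in> {a..b} \<Longrightarrow> (\<psi> has_real_derivative \<psi>' x) (at x)"
    and "\<And>x. x \<in> {a..b} \<Longrightarrow> f x = complex_of_real (\<phi>' x) + \<i> * complex_of_real (\<psi>' x)"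
  shows "(f has_integral (complex_of_real (\<phi> b - \<phi> a) + \<i> * complex_of_real (\<psi> b - \<psi> a))) {a..b}"
proof -
  have "((\<lambda>x. complex_of_real (\<phi>' x) + \<i> * complex_of_real (\<psi>' x)) has_integral
     ((complex_of_real (\<phi> b) + \<i> * complex_of_real (\<psi> b)) - (complex_of_real (\<phi> a) + \<i> * complex_of_real (\<psi> a)))) {a..b}"
  proof (rule fundamental_theorem_of_calculus[OF assms(1)])
    fix x assume x: "x \<in> {a..b}"
    show "((\<lambda>x. complex_of_real (\<phi> x) + \<i> * complex_of_real (\<psi> x)) has_vector_derivative
        complex_of_real (\<phi>' x) + \<i> * complex_of_real (\<psi>' x)) (at x within {a..b})"
      by (intro has_vector_derivative_add has_vector_derivative_mult_right has_vector_derivative_of_real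
            has_field_derivative_at_within[OF assms(2)[OF x]] has_field_derivative_at_within[OF assms(3)[OF x]])
  qed
  also have "((complex_of_real (\<phi> b) + \<i> * complex_of_real (\<psi> b)) - (complex_of_real (\<phi> a) + \<i> * complex_of_real (\<psi> a)))
    = complex_of_real (\<phi> b - \<phi> a) + \<i> * complex_of_real (\<psi> b - \<psi> a)"
    by (simp add: algebra_simps)
  finally have X: "((\<lambda>x. complex_of_real (\<phi>' x) + \<i> * complex_of_real (\<psi>' x)) has_integral
     (complex_of_real (\<phi> b - \<phi> a) + \<i> * complex_of_real (\<psi> b - \<psi> a))) {a..b}" .
  have Y: "(f has_integral (complex_of_real (\<phi> b - \<phi> a) + \<i> * complex_of_real (\<psi> b - \<psi> a))) {a..b} =
     ((\<lambda>x. complex_of_real (\<phi>' x) + \<i> * complex_of_real (\<psi>' x)) has_integral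
     (complex_of_real (\<phi> b - \<phi> a) + \<i> * complex_of_real (\<psi> b - \<psi> a))) {a..b}"
    by (rule has_integral_cong) (rule assms(4))
  show ?thesis using X Y by simp
qed

lemma d1: assumes C: "C > 0" and D: "D > 0"
  shows "((\<lambda>s. P * s + (E/D) * arctan(D * s / C)) has_real_derivative (P + E*C/(C^2+D^2 * s^2))) (at s)"
proof -
  have Cne: "C \<noteq> 0" and Dne: "D \<noteq> 0" using C D by auto
  have pos: "C^2 + D^2 * s^2 > 0" using C by (simp add: add_pos_nonneg)
  have pos': "C*C + D*(D*(s * s)) > 0" using pos by (simp add: power2_eq_square)
  show ?thesis
      apply (rule DERIV_cong)
       apply (rule derivative_eq_intros refl | simp add: Cne Dne)+
      using C D pos' mult_pos_pos[OF C pos'] by (simp add: field_simps power2_eq_square)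
qed
lemma d2: assumes C: "C > 0" and D: "D > 0"
  shows "((\<lambda>s. (- E/(2*D)) * ln (C^2 + D^2 * s^2)) has_real_derivative (- E*D * s/(C^2+D^2 * s^2))) (at s)"
proof -
  have Cne: "C \<noteq> 0" and Dne: "D \<noteq> 0" using C D by auto
  have pos: "C^2 + D^2 * s^2 > 0" using C by (simp add: add_pos_nonneg)
  have pos: "C^2 + D^2 * s^2 > 0" using C by (simp add: add_pos_nonneg)
  have pos': "C*C + D*(D*(s * s)) > 0" using pos by (simp add: power2_eq_square)
  show ?thesis
      apply (rule DERIV_cong)
       apply (rule derivative_eq_intros refl | simp add: pos Cne Dne)+
      using C D pos' mult_pos_pos[OF D pos'] by (simp add: field_simps power2_eq_square)
qed

lemma line_int:
  fixes C D P E :: real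
  assumes C: "C > 0" and D: "D > 0"
  shows "((\<lambda>s. complex_of_real P + complex_of_real E / (complex_of_real C + \<i> * complex_of_real (D * s)))
     has_integral (2 * (complex_of_real P + complex_of_real E * complex_of_real (arctan (D/C)/D)))) {-1..1}"
proof -
  have pos: "C^2 + D^2 * s^2 > 0" for s using C by (simp add: add_pos_nonneg)
  have eq: "complex_of_real P + complex_of_real E / (complex_of_real C + \<i> * complex_of_real (D * s)) =
      complex_of_real (P + E*C/(C^2+D^2 * s^2)) + \<i> * complex_of_real (- E*D * s/(C^2+D^2 * s^2))" for s
  proof -
    have "complex_of_real C + \<i> * complex_of_real (D * s) \<noteq> 0" using C by (simp add: complex_eq_iff)
    moreover have "C * C + D * D * (s * s) \<noteq> 0" using pos[of s] by (simp add: power2_eq_square)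
    ultimately show ?thesis
      by (simp add: complex_eq_iff Re_divide Im_divide power2_eq_square mult_ac)
  qed
  have I: "((\<lambda>s. complex_of_real P + complex_of_real E / (complex_of_real C + \<i> * complex_of_real (D * s)))
     has_integral (complex_of_real ((\<lambda>s. P * s + (E/D) * arctan(D * s / C)) 1 - (\<lambda>s. P * s + (E/D) * arctan(D * s / C)) (-1))
       + \<i> * complex_of_real ((\<lambda>s. (- E/(2*D)) * ln (C^2 + D^2 * s^2)) 1 - (\<lambda>s. (- E/(2*D)) * ln (C^2 + D^2 * s^2)) (-1)))) {-1..1}"
    apply (rule ftc_complex[where \<phi>="\<lambda>s. P * s + (E/D) * arctan(D * s / C)" and \<psi>="\<lambda>s. (- E/(2*D)) * ln (C^2 + D^2 * s^2)"
       and \<phi>'="\<lambda>s. P + E*C/(C^2+D^2 * s^2)" and \<psi>'="\<lambda>s. - E*D * s/(C^2+D^2 * s^2)"])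
    apply simp
    apply (rule d1[OF C D])
    apply (rule d2[OF C D])
    apply (rule eq)
    done
  have A: "(\<lambda>s. P * s + (E/D) * arctan(D * s / C)) 1 - (\<lambda>s. P * s + (E/D) * arctan(D * s / C)) (-1)
       = 2 * (P + E * (arctan (D/C)/D))" by (simp add: arctan_minus field_simps)
  have B: "(\<lambda>s. (- E/(2*D)) * ln (C^2 + D^2 * s^2)) 1 - (\<lambda>s. (- E/(2*D)) * ln (C^2 + D^2 * s^2)) (-1) = 0"
    by simp
  have V: "complex_of_real ((\<lambda>s. P * s + (E/D) * arctan(D * s / C)) 1 - (\<lambda>s. P * s + (E/D) * arctan(D * s / C)) (-1))
       + \<i> * complex_of_real ((\<lambda>s. (- E/(2*D)) * ln (C^2 + D^2 * s^2)) 1 - (\<lambda>s. (- E/(2*D)) * ln (C^2 + D^2 * s^2)) (-1))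
     = 2 * (complex_of_real P + complex_of_real E * complex_of_real (arctan (D/C)/D))"
    unfolding A B by simp
  show ?thesis using I unfolding V .
qed

lemma cpx_split:
  fixes C x P E :: real
  assumes C: "C > 0"
  shows "complex_of_real P + complex_of_real E / (complex_of_real C + \<i> * complex_of_real x) =
      complex_of_real (P + E*C/(C^2 + x^2)) + \<i> * complex_of_real (- E * x/(C^2 + x^2))"
proof -
  have "complex_of_real C + \<i> * complex_of_real x \<noteq> 0" using C by (simp add: complex_eq_iff)
  moreover have "C * C + x * x \<noteq> 0" using C by (simp add: add_pos_nonneg)
  ultimately show ?thesis
    by (simp add: complex_eq_iff Re_divide Im_divide power2_eq_square mult_ac)
qed

lemma phi_deriv:
  fixes C r P E ph :: real
  assumes C: "C > 0" and R: "R = sqrt (C^2 + r^2)"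
  shows "((\<lambda>t. P * t + (E/R) * (t + arctan (((C-R) * (sin t * cos t)) / (R * (cos t)^2 + C * (sin t)^2))))
      has_real_derivative (P + E*C/(C^2 + (r * cos ph)^2))) (at ph)"
proof -
  define s where "s = sin ph"
  define c where "c = cos ph"
  have sc: "s^2 + c^2 = 1" unfolding s_def c_def by simp
  have R2: "R^2 = C^2 + r^2" unfolding R by (simp add: add_pos_nonneg)
  have RC: "R \<ge> C" unfolding R using C by (metis abs_of_pos le_add_same_cancel1 real_sqrt_abs real_sqrt_le_mono zero_le_power2)
  hence Rpos: "R > 0" using C by simp
  define M where "M = R * c^2 + C * s^2"
  define N where "N = (C-R) * (s * c)"
  have "M \<ge> C * (c^2 + s^2)" unfolding M_def using RC by (simp add: algebra_simps mult_right_mono)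
  hence Mpos: "M > 0" using sc C by (simp add: add.commute)
  have dN: "((\<lambda>t. (C-R) * (sin t * cos t)) has_real_derivative ((C-R) * (c^2 - s^2))) (at ph)"
    apply (rule DERIV_cong)
     apply (rule derivative_eq_intros refl | simp)+
    by (simp add: s_def c_def power2_eq_square algebra_simps)
  have dM: "((\<lambda>t. R * (cos t)^2 + C * (sin t)^2) has_real_derivative (2 * (C-R) * s * c)) (at ph)"
    apply (rule DERIV_cong)
     apply (rule derivative_eq_intros refl | simp)+
    by (simp add: s_def c_def power2_eq_square algebra_simps)
  have dq: "((\<lambda>t. ((C-R) * (sin t * cos t)) / (R * (cos t)^2 + C * (sin t)^2)) has_real_derivative
      (((C-R) * (c^2 - s^2)) * M - N * (2 * (C-R) * s * c)) / (M * M)) (at ph)"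
    using DERIV_divide[OF dN dM] Mpos unfolding M_def N_def s_def c_def by simp
  have da: "((\<lambda>t. arctan (((C-R) * (sin t * cos t)) / (R * (cos t)^2 + C * (sin t)^2))) has_real_derivative
      inverse (1 + (N/M)^2) * ((((C-R) * (c^2 - s^2)) * M - N * (2 * (C-R) * s * c)) / (M * M))) (at ph)"
    using DERIV_chain'[OF dq DERIV_arctan] unfolding M_def N_def s_def c_def by simp
  have h1: "M^2 + N^2 = (R^2 * c^2 + C^2 * s^2) * (c^2 + s^2)"
    unfolding M_def N_def by (simp add: power2_eq_square algebra_simps)
  have h2: "((C-R) * (c^2 - s^2)) * M - N * (2 * (C-R) * s * c) = (C-R) * (R * c^2 - C * s^2) * (c^2 + s^2)"
    unfolding M_def N_def by (simp add: power2_eq_square algebra_simps)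
  have h3: "R^2 * c^2 + C^2 * s^2 = C^2 + (r * c)^2"
    using R2 sc by (simp add: power2_eq_square algebra_simps) (metis add.commute distrib_left mult.right_neutral)
  have Dpos: "C^2 + (r * c)^2 > 0" using C by (simp add: add_pos_nonneg)
  have e1: "inverse (1 + (N/M)^2) * ((((C-R) * (c^2 - s^2)) * M - N * (2 * (C-R) * s * c)) / (M * M))
     = (C-R) * (R * c^2 - C * s^2) / (C^2 + (r * c)^2)"
  proof -
    have "inverse (1 + (N/M)^2) * ((((C-R) * (c^2 - s^2)) * M - N * (2 * (C-R) * s * c)) / (M * M))
       = (((C-R) * (c^2 - s^2)) * M - N * (2 * (C-R) * s * c)) / (M^2 + N^2)"
    proof -
      have MN: "M^2 + N^2 > 0" using Mpos by (simp add: add_pos_nonneg)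
      have "1 + (N/M)^2 = (M^2+N^2)/M^2" using Mpos by (simp add: field_simps power2_eq_square)
      hence "inverse (1 + (N/M)^2) = M^2/(M^2+N^2)" by simp
      thus ?thesis using Mpos MN by (simp add: power2_eq_square)
    qed
    also have "\<dots> = (C-R) * (R * c^2 - C * s^2) / (C^2 + (r * c)^2)"
      unfolding h1 h2 using sc h3 by (simp add: add.commute)
    finally show ?thesis .
  qed
  have e2: "P + E/R * (1 + (C-R) * (R * c^2 - C * s^2) / (C^2 + (r * c)^2)) = P + E*C/(C^2 + (r * c)^2)"
  proof -
    have "1 + (C-R) * (R * c^2 - C * s^2) / (C^2 + (r * c)^2) = (C^2 + (r * c)^2 + (C-R) * (R * c^2 - C * s^2)) / (C^2 + (r * c)^2)"
      using Dpos by (simp add: field_simps)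
    also have "C^2 + (r * c)^2 + (C-R) * (R * c^2 - C * s^2) = R * C * (c^2 + s^2)"
      using h3[symmetric] by (simp add: power2_eq_square algebra_simps)
    finally have "1 + (C-R) * (R * c^2 - C * s^2) / (C^2 + (r * c)^2) = R * C / (C^2 + (r * c)^2)"
      using sc by (simp add: add.commute)
    then show ?thesis using Rpos by simp
  qed
  have "((\<lambda>t. P * t + (E/R) * (t + arctan (((C-R) * (sin t * cos t)) / (R * (cos t)^2 + C * (sin t)^2))))
      has_real_derivative (P * 1 + (E/R) * (1 + inverse (1 + (N/M)^2) * ((((C-R) * (c^2 - s^2)) * M - N * (2 * (C-R) * s * c)) / (M * M))))) (at ph)"
    by (rule DERIV_add DERIV_cmult DERIV_ident da)+
  then show ?thesis using e1 e2 unfolding c_def by simp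
qed


lemma psi_deriv:
  fixes C r E ph :: real
  assumes C: "C > 0" and R: "R = sqrt (C^2 + r^2)"
  shows "((\<lambda>t. (- E/(2*R)) * (ln (R + r * sin t) - ln (R - r * sin t)))
      has_real_derivative (- E * (r * cos ph)/(C^2 + (r * cos ph)^2))) (at ph)"
proof -
  have R2: "R^2 = C^2 + r^2" unfolding R by (simp add: add_pos_nonneg)
  have Rpos: "R > 0" unfolding R using C by (simp add: add_pos_nonneg)
  have "\<bar>r\<bar> < R" unfolding R using C
    by (metis add_pos_nonneg le_add_same_cancel2 less_add_same_cancel2 not_le real_sqrt_abs real_sqrt_less_mono zero_le_power2 zero_less_power2 less_imp_neq)
  moreover have "\<bar>r * sin ph\<bar> \<le> \<bar>r\<bar>" by (simp add: abs_mult mult_left_le)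
  ultimately have p1: "R + r * sin ph > 0" and p2: "R - r * sin ph > 0" by linarith+
  have Dpos: "C^2 + (r * cos ph)^2 > 0" using C by (simp add: add_pos_nonneg)
  have p3: "r * sin ph < R" using p2 by simp
  have g1: "((\<lambda>t. R + r * sin t) has_real_derivative (0 + r * cos ph)) (at ph)"
    by (rule DERIV_add DERIV_const DERIV_cmult DERIV_sin)+
  have g2: "((\<lambda>t. R - r * sin t) has_real_derivative (0 - r * cos ph)) (at ph)"
    by (rule DERIV_diff DERIV_const DERIV_cmult DERIV_sin)+
  have d: "((\<lambda>t. (- E/(2*R)) * (ln (R + r * sin t) - ln (R - r * sin t)))
      has_real_derivative ((- E/(2*R)) * (1 / (R + r * sin ph) * (0 + r * cos ph) - 1 / (R - r * sin ph) * (0 - r * cos ph)))) (at ph)"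
    using DERIV_cmult[OF DERIV_diff[OF DERIV_chain'[OF g1 DERIV_ln_divide[OF p1]] DERIV_chain'[OF g2 DERIV_ln_divide[OF p2]]], of "- E/(2*R)"]
    by simp
  have pr: "(R + r * sin ph) * (R - r * sin ph) = C^2 + (r * cos ph)^2"
  proof -
    have "(R + r * sin ph) * (R - r * sin ph) = R^2 - r^2 * (sin ph)^2" by (simp add: power2_eq_square algebra_simps)
    also have "\<dots> = C^2 + r^2 * (1 - (sin ph)^2)" using R2 by (simp add: algebra_simps)
    also have "\<dots> = C^2 + (r * cos ph)^2" by (simp add: cos_squared_eq power_mult_distrib)
    finally show ?thesis .
  qed
  have "1 / (R + r * sin ph) * (0 + r * cos ph) - 1 / (R - r * sin ph) * (0 - r * cos ph)
        = (r * cos ph) * (2 * R) / ((R + r * sin ph) * (R - r * sin ph))"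
    using p1 p2 by (simp add: field_simps)
  also have "\<dots> = (r * cos ph) * (2 * R) / (C^2 + (r * cos ph)^2)" using pr by simp
  finally have eq: "(- E/(2*R)) * (1 / (R + r * sin ph) * (0 + r * cos ph) - 1 / (R - r * sin ph) * (0 - r * cos ph))
     = - E * (r * cos ph)/(C^2 + (r * cos ph)^2)" using Rpos by simp
  show ?thesis using DERIV_cong[OF d eq] .
qed


lemma inner_int:
  fixes C r P E :: real
  assumes C: "C > 0"
  shows "((\<lambda>ph. complex_of_real P + complex_of_real E / (complex_of_real C + \<i> * complex_of_real (r * cos ph)))
     has_integral complex_of_real (2 * pi * (P + E / sqrt (C^2 + r^2)))) {0..2*pi}"
proof -
  define R where "R = sqrt (C^2 + r^2)"
  have I: "((\<lambda>ph. complex_of_real P + complex_of_real E / (complex_of_real C + \<i> * complex_of_real (r * cos ph)))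
     has_integral (complex_of_real ((\<lambda>t. P * t + (E/R) * (t + arctan (((C-R) * (sin t * cos t)) / (R * (cos t)^2 + C * (sin t)^2)))) (2*pi)
          - (\<lambda>t. P * t + (E/R) * (t + arctan (((C-R) * (sin t * cos t)) / (R * (cos t)^2 + C * (sin t)^2)))) 0)
       + \<i> * complex_of_real ((\<lambda>t. (- E/(2*R)) * (ln (R + r * sin t) - ln (R - r * sin t))) (2*pi)
          - (\<lambda>t. (- E/(2*R)) * (ln (R + r * sin t) - ln (R - r * sin t))) 0))) {0..2*pi}"
    apply (rule ftc_complex[where \<phi>="\<lambda>t. P * t + (E/R) * (t + arctan (((C-R) * (sin t * cos t)) / (R * (cos t)^2 + C * (sin t)^2)))"
         and \<psi>="\<lambda>t. (- E/(2*R)) * (ln (R + r * sin t) - ln (R - r * sin t))"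
       and \<phi>'="\<lambda>ph. P + E*C/(C^2 + (r * cos ph)^2)" and \<psi>'="\<lambda>ph. - E * (r * cos ph)/(C^2 + (r * cos ph)^2)"])
    apply simp
    apply (rule phi_deriv[OF C R_def])
    apply (rule psi_deriv[OF C R_def])
    apply (rule cpx_split[OF C])
    done
  have V: "complex_of_real ((\<lambda>t. P * t + (E/R) * (t + arctan (((C-R) * (sin t * cos t)) / (R * (cos t)^2 + C * (sin t)^2)))) (2*pi)
          - (\<lambda>t. P * t + (E/R) * (t + arctan (((C-R) * (sin t * cos t)) / (R * (cos t)^2 + C * (sin t)^2)))) 0)
       + \<i> * complex_of_real ((\<lambda>t. (- E/(2*R)) * (ln (R + r * sin t) - ln (R - r * sin t))) (2*pi)
          - (\<lambda>t. (- E/(2*R)) * (ln (R + r * sin t) - ln (R - r * sin t))) 0)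
      = complex_of_real (2 * pi * (P + E / sqrt (C^2 + r^2)))"
    unfolding R_def[symmetric] by (simp add: algebra_simps)
  show ?thesis using I unfolding V .
qed

lemma outer_deriv:
  fixes C D P E th :: real
  assumes C: "C > 0" and D: "D > 0"
  shows "((\<lambda>t. - 2 * pi * P * cos t - (2 * pi * E / D) * arctan (D * cos t / sqrt (C^2 + (D * sin t)^2)))
     has_real_derivative (sin th * (2 * pi * (P + E / sqrt (C^2 + (D * sin th)^2))))) (at th)"
proof -
  define s where "s = sin th"
  define c where "c = cos th"
  define Q where "Q = sqrt (C^2 + (D * s)^2)"
  have sc: "s^2 + c^2 = 1" unfolding s_def c_def by simp
  have Q2pos: "C^2 + (D * s)^2 > 0" using C by (simp add: add_pos_nonneg)
  have Qpos: "Q > 0" unfolding Q_def using Q2pos by simp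
  have Q2: "Q^2 = C^2 + (D * s)^2" unfolding Q_def using Q2pos by simp
  have dQ: "((\<lambda>t. sqrt (C^2 + (D * sin t)^2)) has_real_derivative (D^2 * s * c / Q)) (at th)"
  proof -
    have di: "((\<lambda>t. C^2 + (D * sin t)^2) has_real_derivative (2 * D^2 * s * c)) (at th)"
      apply (rule DERIV_cong)
       apply (rule derivative_eq_intros refl | simp)+
      unfolding s_def c_def by (simp add: power2_eq_square)
    have "((\<lambda>t. sqrt (C^2 + (D * sin t)^2)) has_real_derivative (inverse (sqrt (C^2 + (D * s)^2)) / 2 * (2 * D^2 * s * c))) (at th)"
      using DERIV_chain'[OF di DERIV_real_sqrt[OF Q2pos[unfolded s_def]]] unfolding s_def by simp
    moreover have "inverse (sqrt (C^2 + (D * s)^2)) / 2 * (2 * D^2 * s * c) = D^2 * s * c / Q"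
      unfolding Q_def by (simp add: field_simps)
    ultimately show ?thesis by simp
  qed
  have dq: "((\<lambda>t. D * cos t / sqrt (C^2 + (D * sin t)^2)) has_real_derivative
       ((D * (- s)) * Q - (D * c) * (D^2 * s * c / Q)) / (Q * Q)) (at th)"
    using DERIV_divide[OF DERIV_cmult[where c=D, OF DERIV_cos] dQ] Qpos C unfolding Q_def s_def c_def by simp
  have da: "((\<lambda>t. arctan (D * cos t / sqrt (C^2 + (D * sin t)^2))) has_real_derivative
       inverse (1 + (D * c / Q)^2) * (((D * (- s)) * Q - (D * c) * (D^2 * s * c / Q)) / (Q * Q))) (at th)"
    using DERIV_chain'[OF dq DERIV_arctan] unfolding Q_def s_def c_def by simp
  have e1: "inverse (1 + (D * c / Q)^2) * (((D * (- s)) * Q - (D * c) * (D^2 * s * c / Q)) / (Q * Q)) = - D * s / Q"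
  proof -
    have CD: "C^2 + D^2 > 0" using C by (simp add: add_pos_nonneg)
    have h1: "1 + (D * c / Q)^2 = (C^2 + D^2) / Q^2"
    proof -
      have "1 + (D * c / Q)^2 = (Q^2 + (D*c)^2) / Q^2" using Qpos by (simp add: field_simps)
      also have "Q^2 + (D*c)^2 = C^2 + D^2 * (s^2 + c^2)" unfolding Q2 by (simp add: power2_eq_square algebra_simps)
      finally show ?thesis using sc by simp
    qed
    have h2: "((D * (- s)) * Q - (D * c) * (D^2 * s * c / Q)) = - D * s * (Q^2 + D^2 * c^2) / Q"
      using Qpos by (simp add: field_simps power2_eq_square)
    have h3: "Q^2 + D^2 * c^2 = C^2 + D^2" unfolding Q2 using sc
      by (simp add: power2_eq_square algebra_simps) (metis distrib_left mult.right_neutral)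
    have gen: "inverse (X / Q^2) * ((- D * s * X / Q) / (Q * Q)) = - D * s / Q" if "X > 0" for X
      using Qpos that by (simp add: field_simps power2_eq_square)
    have "inverse ((C^2 + D^2) / Q^2) * ((- D * s * (C^2 + D^2) / Q) / (Q * Q)) = - D * s / Q"
      by (rule gen[OF CD])
    then show ?thesis unfolding h1 h2 h3 .
  qed
  have d: "((\<lambda>t. - 2 * pi * P * cos t - (2 * pi * E / D) * arctan (D * cos t / sqrt (C^2 + (D * sin t)^2)))
     has_real_derivative (- 2 * pi * P * (- sin th) - (2 * pi * E / D) * (inverse (1 + (D * c / Q)^2) * (((D * (- s)) * Q - (D * c) * (D^2 * s * c / Q)) / (Q * Q))))) (at th)"
    using DERIV_diff[OF DERIV_cmult[where c="- 2 * pi * P", OF DERIV_cos] DERIV_cmult[where c="2 * pi * E / D", OF da]] by simp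
  have eq: "- 2 * pi * P * (- sin th) - (2 * pi * E / D) * (inverse (1 + (D * c / Q)^2) * (((D * (- s)) * Q - (D * c) * (D^2 * s * c / Q)) / (Q * Q)))
     = sin th * (2 * pi * (P + E / sqrt (C^2 + (D * sin th)^2)))"
    unfolding e1 using D unfolding Q_def s_def by (simp add: field_simps)
  show ?thesis using DERIV_cong[OF d eq] .
qed


lemma sph1: "sph th ph $ 1 = sin th * cos ph" unfolding sph_def by simp

lemma sphere_h:
  fixes C D P E :: real and c0 :: complex
  assumes C: "C > 0" and D: "D > 0"
  defines "h \<equiv> \<lambda>v::real^3. c0 * (complex_of_real P + complex_of_real E / (complex_of_real C + \<i> * complex_of_real (D * v$1)))"
  shows "sphere_integrable h \<and> sphere_avg h = c0 * (complex_of_real P + complex_of_real E * complex_of_real (arctan (D/C)/D))"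
proof -
  define Q where "Q = (\<lambda>th. 2 * pi * (P + E / sqrt (C^2 + (D * sin th)^2)))"
  have inner: "((\<lambda>ph. h (sph th ph)) has_integral (c0 * complex_of_real (Q th))) {0..2*pi}" for th
  proof -
    have "((\<lambda>ph. c0 * (complex_of_real P + complex_of_real E / (complex_of_real C + \<i> * complex_of_real ((D * sin th) * cos ph))))
       has_integral (c0 * complex_of_real (2 * pi * (P + E / sqrt (C^2 + (D * sin th)^2))))) {0..2*pi}"
      by (rule has_integral_mult_right[OF inner_int[OF C]])
    moreover have "(\<lambda>ph. h (sph th ph)) = (\<lambda>ph. c0 * (complex_of_real P + complex_of_real E / (complex_of_real C + \<i> * complex_of_real ((D * sin th) * cos ph))))"
      unfolding h_def sph1 by (simp add: mult.assoc)
    ultimately show ?thesis unfolding Q_def by simp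
  qed
  have int_eq: "integral {0..2*pi} (\<lambda>ph. h (sph th ph)) = c0 * complex_of_real (Q th)" for th
    using inner by (rule integral_unique)
  define \<Phi> where "\<Phi> = (\<lambda>t. - 2 * pi * P * cos t - (2 * pi * E / D) * arctan (D * cos t / sqrt (C^2 + (D * sin t)^2)))"
  have outer0: "((\<lambda>th. complex_of_real (sin th * Q th)) has_integral
      (complex_of_real (\<Phi> pi - \<Phi> 0) + \<i> * complex_of_real ((\<lambda>t. 0) pi - (\<lambda>t. 0) 0))) {0..pi}"
    apply (rule ftc_complex[where \<phi>=\<Phi> and \<psi>="\<lambda>t. 0" and \<phi>'="\<lambda>th. sin th * Q th" and \<psi>'="\<lambda>t. 0"])
    apply simp
    unfolding \<Phi>_def Q_def apply (rule outer_deriv[OF C D])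
    apply simp
    apply simp
    done
  have Phi: "\<Phi> pi - \<Phi> 0 = 4 * pi * (P + E * (arctan (D/C)/D))"
    unfolding \<Phi>_def using C by (simp add: arctan_minus field_simps)
  have outer: "((\<lambda>th. complex_of_real (sin th) * integral {0..2*pi} (\<lambda>ph. h (sph th ph))) has_integral
      (c0 * complex_of_real (4 * pi * (P + E * (arctan (D/C)/D))))) {0..pi}"
  proof -
    have "((\<lambda>th. c0 * complex_of_real (sin th * Q th)) has_integral (c0 * complex_of_real (4 * pi * (P + E * (arctan (D/C)/D))))) {0..pi}"
      using has_integral_mult_right[OF outer0, of c0] unfolding Phi by simp
    moreover have "(\<lambda>th. complex_of_real (sin th) * integral {0..2*pi} (\<lambda>ph. h (sph th ph))) = (\<lambda>th. c0 * complex_of_real (sin th * Q th))"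
      unfolding int_eq by (simp add: fun_eq_iff mult_ac)
    ultimately show ?thesis by simp
  qed
  have "sphere_integrable h"
    unfolding sphere_integrable_def using inner outer by blast
  moreover have "sphere_avg h = c0 * (complex_of_real P + complex_of_real E * complex_of_real (arctan (D/C)/D))"
    unfolding sphere_avg_def integral_unique[OF outer] by (simp add: field_simps)
  ultimately show ?thesis by simp
qed

lemma frac_split:
  fixes A B C D s :: real
  assumes C: "C > 0" and D: "D \<noteq> 0"
  shows "(complex_of_real A + \<i> * complex_of_real (B * s)) / (complex_of_real C + \<i> * complex_of_real (D * s))
    = complex_of_real (B/D) + complex_of_real (A - B*C/D) / (complex_of_real C + \<i> * complex_of_real (D * s))"
proof -
  have den: "complex_of_real C + \<i> * complex_of_real (D * s) \<noteq> 0" using C by (simp add: complex_eq_iff)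
  have "complex_of_real (B/D) * (complex_of_real C + \<i> * complex_of_real (D * s)) + complex_of_real (A - B*C/D)
     = complex_of_real A + \<i> * complex_of_real (B * s)"
    using D by (simp add: field_simps)
  then show ?thesis using den by (simp add: field_simps)
qed

definition Jv :: "real \<Rightarrow> real \<Rightarrow> real \<Rightarrow> real \<Rightarrow> real \<Rightarrow> real" where
  "Jv k d a lam \<mu> = (a*lam/(1+d*lam^2))/(k*lam)
     + (1 - k - (a*lam/(1+d*lam^2))*(1+k*\<mu>)/(k*lam)) * (arctan ((k*lam)/(1+k*\<mu>))/(k*lam))"

lemma disp_fun:
  fixes k d a lam \<mu> :: real
  assumes k: "k > 0" and lam: "lam > 0" and mu: "1 + k*\<mu> > 0"
  shows "(\<lambda>s. (complex_of_real (1 - k) + \<i> * complex_of_real (a * lam * s / (1 + d * lam^2)))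
            / (complex_of_real (1 + k * \<mu>) + \<i> * complex_of_real (k * lam * s)))
    = (\<lambda>s. complex_of_real ((a*lam/(1+d*lam^2))/(k*lam)) + complex_of_real (1 - k - (a*lam/(1+d*lam^2))*(1+k*\<mu>)/(k*lam))
          / (complex_of_real (1 + k * \<mu>) + \<i> * complex_of_real ((k * lam) * s)))"
proof
  fix s :: real
  have D: "k * lam \<noteq> 0" using k lam by simp
  have "a * lam * s / (1 + d * lam^2) = (a*lam/(1+d*lam^2)) * s" by simp
  then show "(complex_of_real (1 - k) + \<i> * complex_of_real (a * lam * s / (1 + d * lam^2)))
            / (complex_of_real (1 + k * \<mu>) + \<i> * complex_of_real (k * lam * s))
    = complex_of_real ((a*lam/(1+d*lam^2))/(k*lam)) + complex_of_real (1 - k - (a*lam/(1+d*lam^2))*(1+k*\<mu>)/(k*lam))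
          / (complex_of_real (1 + k * \<mu>) + \<i> * complex_of_real ((k * lam) * s))"
    using frac_split[OF mu D, of "1 - k" "a*lam/(1+d*lam^2)" s] by simp
qed

lemma disp_iff:
  fixes k d a lam \<mu> :: real
  assumes k: "k > 0" and lam: "lam > 0" and mu: "1 + k*\<mu> > 0"
  shows "dispersion k d a lam \<mu> \<longleftrightarrow> Jv k d a lam \<mu> = 1"
proof -
  have D: "k * lam > 0" using k lam by simp
  have "integral {-1..1} (\<lambda>s. (complex_of_real (1 - k) + \<i> * complex_of_real (a * lam * s / (1 + d * lam^2)))
            / (complex_of_real (1 + k * \<mu>) + \<i> * complex_of_real (k * lam * s)))
     = 2 * complex_of_real (Jv k d a lam \<mu>)"
    unfolding disp_fun[OF k lam mu]
  proof (rule integral_unique)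
    show "((\<lambda>s. complex_of_real ((a*lam/(1+d*lam^2))/(k*lam)) + complex_of_real (1 - k - (a*lam/(1+d*lam^2))*(1+k*\<mu>)/(k*lam))
          / (complex_of_real (1 + k * \<mu>) + \<i> * complex_of_real ((k * lam) * s))) has_integral 2 * complex_of_real (Jv k d a lam \<mu>)) {-1..1}"
      using line_int[OF mu D, of "(a*lam/(1+d*lam^2))/(k*lam)" "1 - k - (a*lam/(1+d*lam^2))*(1+k*\<mu>)/(k*lam)"]
      unfolding Jv_def by simp
  qed
  then show ?thesis unfolding dispersion_def by simp
qed

lemma Jbound:
  fixes A B C D :: real
  assumes B: "B > 0" and D: "D > 0" and C: "C \<ge> 1"
  shows "B/D + (A - B*C/D)*(arctan(D/C)/D) \<le> (B*D/3 + \<bar>A\<bar>)/C"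
proof -
  define x where "x = D/C"
  define t where "t = arctan x"
  have Cp: "C > 0" using C by simp
  have x: "x > 0" unfolding x_def using D Cp by simp
  have t1: "t \<le> x" unfolding t_def using arctan_lt[OF x] by simp
  have t2: "x - x^3/3 \<le> t" unfolding t_def using arctan_lb x by simp
  have t0: "t \<ge> 0" unfolding t_def using x by simp
  have e: "B/D + (A - B*C/D)*(t/D) = (B/D) * ((x - t)/x) + A * t / D"
    unfolding x_def using D Cp by (simp add: field_simps)
  have "(x - t)/x \<le> x^2/3"
  proof -
    have "x - t \<le> x^3/3" using t2 by simp
    hence "(x - t)/x \<le> (x^3/3)/x" using x by (intro divide_right_mono) auto
    also have "\<dots> = x^2/3" using x by (simp add: power2_eq_square power3_eq_cube)
    finally show ?thesis .
  qed
  hence b1: "(B/D) * ((x - t)/x) \<le> (B/D) * (x^2/3)" using B D by (intro mult_left_mono) auto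
  have "(B/D) * (x^2/3) = B*D/(3*C^2)" unfolding x_def using D Cp by (simp add: field_simps power2_eq_square)
  also have "\<dots> \<le> B*D/(3*C)"
  proof -
    have "3*C \<le> 3*C^2" using C by (simp add: power2_eq_square)
    thus ?thesis using B D Cp by (intro divide_left_mono) auto
  qed
  finally have b1': "(B/D) * ((x - t)/x) \<le> B*D/(3*C)" using b1 by linarith
  have "A * t / D \<le> \<bar>A\<bar> * t / D" using t0 D by (intro divide_right_mono mult_right_mono) auto
  also have "\<dots> \<le> \<bar>A\<bar> * x / D" using t1 D by (intro divide_right_mono mult_left_mono) auto
  also have "\<dots> = \<bar>A\<bar> / C" unfolding x_def using D Cp by simp
  finally have b2: "A * t / D \<le> \<bar>A\<bar> / C" .
  have "B/D + (A - B*C/D)*(arctan(D/C)/D) \<le> B*D/(3*C) + \<bar>A\<bar> / C"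
    using e b1' b2 unfolding t_def x_def by linarith
  also have "\<dots> = (B*D/3 + \<bar>A\<bar>)/C" using Cp by (simp add: field_simps)
  finally show ?thesis .
qed


lemma beta_facts:
  fixes k d a lam :: real
  assumes k: "k > 0" and d: "d \<ge> 0" and a: "a > 0" and lam: "lam > 0"
    and hyp: "a / k > (1 + k / (k * lam / arctan (k * lam) - 1)) * (1 + d * lam^2)"
  shows "a / (k * (1 + d * lam^2)) > 1 + k / (k * lam / arctan (k * lam) - 1)"
    and "k / (k * lam / arctan (k * lam) - 1) > 0"
    and "Jv k d a lam 0 > 1"
proof -
  define y where "y = k * lam"
  define t where "t = arctan y"
  define u where "u = y / t - 1"
  define \<beta> where "\<beta> = a / (k * (1 + d * lam^2))"
  have y: "y > 0" unfolding y_def using k lam by simp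
  have t: "t > 0" "t < y" unfolding t_def using y arctan_lt[OF y] by auto
  have u: "u > 0" unfolding u_def using t by (simp add: field_simps)
  have q: "1 + d * lam^2 > 0" using d by (simp add: add_pos_nonneg)
  have "1 + k / u < (a / k) / (1 + d * lam^2)"
    by (rule pos_less_divide_eq[OF q, THEN iffD2]) (use hyp in \<open>simp add: u_def y_def t_def\<close>)
  hence b: "\<beta> > 1 + k / u" unfolding \<beta>_def by (simp add: field_simps)
  then show "a / (k * (1 + d * lam^2)) > 1 + k / (k * lam / arctan (k * lam) - 1)"
    unfolding \<beta>_def u_def y_def t_def by simp
  show "k / (k * lam / arctan (k * lam) - 1) > 0" using k u unfolding u_def y_def t_def by simp
  have "(\<beta> - 1) * u > k" using b u by (simp add: field_simps)
  have J0: "Jv k d a lam 0 = \<beta> + (1 - k - \<beta>) / (1 + u)"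
  proof -
    have gen: "(a*lam/X)/(k*lam) = a/(k*X)" if "X > 0" for X using lam k that by (simp add: field_simps)
    have "(a*lam/(1+d*lam^2))/(k*lam) = \<beta>" unfolding \<beta>_def by (rule gen[OF q])
    moreover have "arctan (k*lam) / (k*lam) = 1 / (1 + u)" unfolding u_def t_def y_def using t y
      unfolding t_def y_def by (simp add: field_simps)
    ultimately show ?thesis unfolding Jv_def by (simp add: field_simps)
  qed
  have "\<beta> + (1 - k - \<beta>) / (1 + u) - 1 = ((\<beta> - 1) * u - k) / (1 + u)" using u by (simp add: field_simps)
  also have "\<dots> > 0" using \<open>(\<beta> - 1) * u > k\<close> u by simp
  finally show "Jv k d a lam 0 > 1" unfolding J0 by simp
qed


lemma exists_mu:
  fixes k d a lam :: real
  assumes k: "k > 0" and d: "d \<ge> 0" and a: "a > 0" and lam: "lam > 0"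
    and hyp: "a / k > (1 + k / (k * lam / arctan (k * lam) - 1)) * (1 + d * lam^2)"
  shows "\<exists>\<mu>>0. Jv k d a lam \<mu> = 1"
proof -
  define B where "B = a*lam/(1+d*lam^2)"
  define D where "D = k * lam"
  define A where "A = 1 - k"
  have q: "1 + d * lam^2 > 0" using d by (simp add: add_pos_nonneg)
  have B: "B > 0" unfolding B_def using a lam q by simp
  have D: "D > 0" unfolding D_def using k lam by simp
  define M where "M = (B*D/3 + \<bar>A\<bar>)/k + 1"
  have M: "M > 0" unfolding M_def using B D k by (simp add: add_nonneg_pos)
  have JJ: "Jv k d a lam \<mu> = B/D + (A - B*(1+k*\<mu>)/D)*(arctan(D/(1+k*\<mu>))/D)" for \<mu>
    unfolding Jv_def B_def D_def A_def by simp
  have CM: "1 + k*M = B*D/3 + \<bar>A\<bar> + 1 + k" unfolding M_def using k by (simp add: field_simps)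
  have "Jv k d a lam M \<le> (B*D/3 + \<bar>A\<bar>)/(1 + k*M)"
    unfolding JJ by (rule Jbound[OF B D]) (simp add: CM add_nonneg_nonneg B D less_imp_le k)
  also have "\<dots> < 1"
    using B D k unfolding CM by (simp add: divide_less_eq add_nonneg_pos)
  finally have JM: "Jv k d a lam M < 1" .
  have J0: "Jv k d a lam 0 > 1" by (rule beta_facts(3)[OF k d a lam hyp])
  have cont: "\<forall>x. 0 \<le> x \<and> x \<le> M \<longrightarrow> isCont (Jv k d a lam) x"
  proof (intro allI impI)
    fix x :: real assume x: "0 \<le> x \<and> x \<le> M"
    have "k * x \<ge> 0" using x k by simp
    hence "1 + k * x \<noteq> 0" by linarith
    hence "isCont (\<lambda>\<mu>. B/D + (A - B*(1+k*\<mu>)/D)*(arctan(D/(1+k*\<mu>))/D)) x"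
      using D by (intro continuous_intros) auto
    then show "isCont (Jv k d a lam) x" unfolding JJ[abs_def] .
  qed
  obtain x where x: "0 \<le> x" "x \<le> M" "Jv k d a lam x = 1"
    using IVT2[of "Jv k d a lam" M 1 0] JM J0 M cont by fastforce
  have "x \<noteq> 0" using x(3) J0 by auto
  then show ?thesis using x by (intro exI[of _ x]) auto
qed

lemma vd_exp:
  fixes lam x :: real and c :: complex
  shows "((\<lambda>y. c * exp (\<i> * complex_of_real (lam * y))) has_vector_derivative
           (c * (\<i> * complex_of_real lam) * exp (\<i> * complex_of_real (lam * x)))) (at x)"
proof -
  have "((\<lambda>z. c * exp (\<i> * complex_of_real lam * z)) has_field_derivative
          (c * (exp (\<i> * complex_of_real lam * complex_of_real x) * (\<i> * complex_of_real lam)))) (at (complex_of_real x))"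
    by (rule DERIV_cmult, rule DERIV_cong, rule DERIV_chain'[OF DERIV_cmult[OF DERIV_ident] DERIV_exp]) simp
  from has_vector_derivative_real_field[OF this]
  show ?thesis by (simp add: mult_ac)
qed

lemma vd_exp_eq:
  fixes lam x :: real and c :: complex
  shows "vector_derivative (\<lambda>y. c * exp (\<i> * complex_of_real (lam * y))) (at x) =
           c * (\<i> * complex_of_real lam) * exp (\<i> * complex_of_real (lam * x))"
  by (rule vector_derivative_at[OF vd_exp])

lemma vd_exp_diff:
  fixes lam x :: real and c :: complex
  shows "(\<lambda>y. c * exp (\<i> * complex_of_real (lam * y))) differentiable (at x)"
  by (rule differentiableI_vector[OF vd_exp])

lemma sph_norm: "sph th ph \<in> sphere 0 1"
proof -
  have "norm (sph th ph) = sqrt ((sin th * cos ph)^2 + (sin th * sin ph)^2 + (cos th)^2)"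
    unfolding sph_def norm_vec_def L2_set_def sum_3 by (simp add: power2_eq_square)
  also have "(sin th * cos ph)^2 + (sin th * sin ph)^2 = (sin th)^2"
    by (metis mult.right_neutral power_mult_distrib sin_cos_squared_add2 distrib_left)
  finally show ?thesis by simp
qed

lemma sphere_avg_cong:
  assumes "\<And>v. v \<in> sphere 0 1 \<Longrightarrow> f v = g v"
  shows "sphere_avg f = sphere_avg g"
proof -
  have "f (sph th ph) = g (sph th ph)" for th ph using assms[OF sph_norm] .
  then show ?thesis unfolding sphere_avg_def by simp
qed

lemma alg5:
  fixes G e K Mu V L Aa S :: complex
  assumes "G * (1 + K*Mu + \<i>*(K*L*V)) = (1 - K) + \<i>*(Aa*L*V*S)"
  shows "K * (Mu * (G * e) + V * (G * (\<i> * L) * e)) = e + Aa * V * (S * (\<i> * L) * e) - G * e - K * e"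
  using assms by algebra

lemma alg5':
  fixes G K Mu V L Aa Sh \<rho> S Dd :: complex
  assumes "K * (Mu * G + V * (G * (\<i> * L))) = \<rho> + Aa * V * (Sh * (\<i> * L)) - G - K * \<rho>"
    and "Sh = \<rho> * S"
  shows "G * (1 + K*Mu + \<i>*(K*L*V)) = \<rho> * ((1 - K) + \<i>*(Aa*L*V*S))"
  using assms by algebra

lemma avg_fr:
  fixes k d a lam \<mu> :: real and c0 :: complex
  assumes k: "k > 0" and lam: "lam > 0" and mu: "1 + k*\<mu> > 0"
  shows "sphere_integrable (\<lambda>v. c0 * ((complex_of_real (1 - k) + \<i> * complex_of_real (a * lam * v$1 / (1 + d * lam^2)))
            / (complex_of_real (1 + k * \<mu>) + \<i> * complex_of_real (k * lam * v$1))))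
    \<and> sphere_avg (\<lambda>v. c0 * ((complex_of_real (1 - k) + \<i> * complex_of_real (a * lam * v$1 / (1 + d * lam^2)))
            / (complex_of_real (1 + k * \<mu>) + \<i> * complex_of_real (k * lam * v$1)))) = c0 * complex_of_real (Jv k d a lam \<mu>)"
proof -
  have D: "k * lam > 0" using k lam by simp
  have F: "(\<lambda>v::real^3. c0 * ((complex_of_real (1 - k) + \<i> * complex_of_real (a * lam * v$1 / (1 + d * lam^2)))
            / (complex_of_real (1 + k * \<mu>) + \<i> * complex_of_real (k * lam * v$1))))
     = (\<lambda>v. c0 * (complex_of_real ((a*lam/(1+d*lam^2))/(k*lam)) + complex_of_real (1 - k - (a*lam/(1+d*lam^2))*(1+k*\<mu>)/(k*lam))
          / (complex_of_real (1 + k * \<mu>) + \<i> * complex_of_real ((k * lam) * v$1))))"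
    using fun_cong[OF disp_fun[OF k lam mu, of a d]] by simp
  show ?thesis unfolding F
    using sphere_h[OF mu D, of c0 "(a*lam/(1+d*lam^2))/(k*lam)" "1 - k - (a*lam/(1+d*lam^2))*(1+k*\<mu>)/(k*lam)"]
    unfolding Jv_def by simp
qed


lemma disp_imp_fourier:
  fixes k d a lam \<mu> :: real
  assumes k: "k > 0" and d: "d \<ge> 0" and a: "a > 0" and lam: "lam > 0" and mu: "\<mu> > 0"
    and J: "Jv k d a lam \<mu> = 1"
  shows "fourier_solution k d a lam (complex_of_real \<mu>)"
proof -
  define fr where "fr = (\<lambda>s. (complex_of_real (1 - k) + \<i> * complex_of_real (a * lam * s / (1 + d * lam^2)))
            / (complex_of_real (1 + k * \<mu>) + \<i> * complex_of_real (k * lam * s)))"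
  define gh where "gh = (\<lambda>v::real^3. fr (v$1))"
  define Sh where "Sh = complex_of_real (1 / (1 + d * lam^2))"
  define e where "e = (\<lambda>y::real. exp (\<i> * complex_of_real (lam * y)))"
  have mu1: "1 + k * \<mu> > 0" using k mu by (simp add: add_pos_pos)
  have q: "1 + d * lam^2 > 0" using d by (simp add: add_pos_nonneg)
  have den: "complex_of_real (1 + k * \<mu>) + \<i> * complex_of_real (k * lam * s) \<noteq> 0" for s
    using mu1 by (simp add: complex_eq_iff)
  have AV: "sphere_integrable (\<lambda>v. c0 * gh v) \<and> sphere_avg (\<lambda>v. c0 * gh v) = c0" for c0
    using avg_fr[OF k lam mu1, of c0 a d] unfolding J gh_def fr_def by simp
  have gx: "(\<lambda>v. gh v * e x) = (\<lambda>v. e x * gh v)" for x by (simp add: mult.commute)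
  define v1 where "v1 = (vector [1, 0, 0] :: real^3)"
  have v1s: "v1 \<in> sphere 0 1" unfolding v1_def by (simp add: norm_vec_def L2_set_def sum_3)
  have "gh v1 \<noteq> 0"
  proof -
    have "complex_of_real (1 - k) + \<i> * complex_of_real (a * lam * 1 / (1 + d * lam^2)) \<noteq> 0"
      using a lam q by (simp add: complex_eq_iff)
    then show ?thesis unfolding gh_def fr_def v1_def using den[of 1] by simp
  qed
  have Sg': "vector_derivative (\<lambda>y. Sh * e y) (at x) = Sh * (\<i> * complex_of_real lam) * e x" for x
    unfolding e_def by (rule vd_exp_eq)
  have Sg'f: "(\<lambda>y. vector_derivative (\<lambda>y. Sh * e y) (at y)) = (\<lambda>y. (Sh * (\<i> * complex_of_real lam)) * e y)"
    using Sg' by (simp add: fun_eq_iff)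
  have Sg'': "vector_derivative (\<lambda>y. vector_derivative (\<lambda>y. Sh * e y) (at y)) (at x)
      = Sh * (\<i> * complex_of_real lam) * (\<i> * complex_of_real lam) * e x" for x
    unfolding Sg'f unfolding e_def by (rule vd_exp_eq)
  have g': "vector_derivative (\<lambda>y. gh v * e y) (at x) = gh v * (\<i> * complex_of_real lam) * e x" for v x
    unfolding e_def by (rule vd_exp_eq)
  have L: "L_solution k d a (complex_of_real \<mu>) (\<lambda>x v. gh v * e x) (\<lambda>x. Sh * e x)"
    unfolding L_solution_def
  proof (intro conjI allI ballI)
    fix x show "sphere_integrable (\<lambda>v. gh v * e x)" unfolding gx using AV by blast
  next
    fix v x show "(\<lambda>y. gh v * e y) differentiable (at x)" unfolding e_def by (rule vd_exp_diff)
  next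
    fix x show "(\<lambda>y. Sh * e y) differentiable (at x)" unfolding e_def by (rule vd_exp_diff)
  next
    fix x show "(\<lambda>y. vector_derivative (\<lambda>y. Sh * e y) (at y)) differentiable (at x)"
      by (subst Sg'f) (unfold e_def, rule vd_exp_diff)
  next
    fix x and v :: "real^3"
    have avg: "sphere_avg (\<lambda>v. gh v * e x) = e x" unfolding gx using AV by blast
    have key: "gh v * (1 + complex_of_real k * complex_of_real \<mu> + \<i> * (complex_of_real k * complex_of_real lam * complex_of_real (v$1)))
       = (1 - complex_of_real k) + \<i> * (complex_of_real a * complex_of_real lam * complex_of_real (v$1) * Sh)"
    proof -
      have "gh v * (complex_of_real (1 + k * \<mu>) + \<i> * complex_of_real (k * lam * v$1))
          = complex_of_real (1 - k) + \<i> * complex_of_real (a * lam * v$1 / (1 + d * lam^2))"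
        unfolding gh_def fr_def using den[of "v$1"] by simp
      then show ?thesis unfolding Sh_def by (simp add: divide_inverse mult_ac)
    qed
    show "complex_of_real k * (complex_of_real \<mu> * (gh v * e x) + complex_of_real (v$1) * vector_derivative (\<lambda>y. gh v * e y) (at x))
        = sphere_avg (\<lambda>v. gh v * e x) + complex_of_real a * complex_of_real (v$1) * vector_derivative (\<lambda>y. Sh * e y) (at x)
          - gh v * e x - complex_of_real k * sphere_avg (\<lambda>v. gh v * e x)"
      unfolding avg g' Sg' by (rule alg5[OF key])
  next
    fix x
    have avg: "sphere_avg (\<lambda>v. gh v * e x) = e x" unfolding gx using AV by blast
    have "Sh * (1 + complex_of_real d * complex_of_real lam ^ 2) = 1"
    proof -
      have "complex_of_real (1 + d*lam^2) \<noteq> 0" using q by (simp only: of_real_eq_0_iff)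
      hence "1 + complex_of_real d * (complex_of_real lam)^2 \<noteq> 0" by simp
      then show ?thesis unfolding Sh_def by (simp add: field_simps)
    qed
    then show "- complex_of_real d * vector_derivative (\<lambda>y. vector_derivative (\<lambda>y. Sh * e y) (at y)) (at x) + Sh * e x
        = sphere_avg (\<lambda>v. gh v * e x)"
      unfolding avg Sg'' apply (simp add: algebra_simps power2_eq_square) by algebra
  qed
  show ?thesis unfolding fourier_solution_def
    using L v1s \<open>gh v1 \<noteq> 0\<close> unfolding e_def by blast
qed


lemma fourier_imp_disp:
  fixes k d a lam \<mu> :: real
  assumes k: "k > 0" and d: "d \<ge> 0" and lam: "lam > 0" and mu: "\<mu> > 0"
    and F: "fourier_solution k d a lam (complex_of_real \<mu>)"
  shows "Jv k d a lam \<mu> = 1"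
proof -
  define e where "e = (\<lambda>y::real. exp (\<i> * complex_of_real (lam * y)))"
  obtain gh Sh v0 where v0: "v0 \<in> sphere 0 1" "gh v0 \<noteq> 0"
    and L: "L_solution k d a (complex_of_real \<mu>) (\<lambda>x v. gh v * e x) (\<lambda>x. Sh * e x)"
    using F unfolding fourier_solution_def e_def by blast
  have mu1: "1 + k * \<mu> > 0" using k mu by (simp add: add_pos_pos)
  have q: "1 + d * lam^2 > 0" using d by (simp add: add_pos_nonneg)
  have den: "complex_of_real (1 + k * \<mu>) + \<i> * complex_of_real (k * lam * s) \<noteq> 0" for s
    using mu1 by (simp add: complex_eq_iff)
  have e0: "e 0 = 1" unfolding e_def by simp
  have g0: "(\<lambda>v. gh v * e 0) = gh" using e0 by simp
  define \<rho> where "\<rho> = sphere_avg gh"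
  define S where "S = complex_of_real (1 / (1 + d * lam^2))"
  have Sg': "vector_derivative (\<lambda>y. Sh * e y) (at x) = Sh * (\<i> * complex_of_real lam) * e x" for x
    unfolding e_def by (rule vd_exp_eq)
  have Sg'f: "(\<lambda>y. vector_derivative (\<lambda>y. Sh * e y) (at y)) = (\<lambda>y. (Sh * (\<i> * complex_of_real lam)) * e y)"
    using Sg' by (simp add: fun_eq_iff)
  have Sg'': "vector_derivative (\<lambda>y. vector_derivative (\<lambda>y. Sh * e y) (at y)) (at x)
      = Sh * (\<i> * complex_of_real lam) * (\<i> * complex_of_real lam) * e x" for x
    unfolding Sg'f unfolding e_def by (rule vd_exp_eq)
  have g': "vector_derivative (\<lambda>y. gh v * e y) (at x) = gh v * (\<i> * complex_of_real lam) * e x" for v x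
    unfolding e_def by (rule vd_exp_eq)
  have E5: "\<forall>v\<in>sphere 0 1. complex_of_real k * (complex_of_real \<mu> * (gh v * e 0) + complex_of_real (v$1) * vector_derivative (\<lambda>y. gh v * e y) (at 0))
        = sphere_avg (\<lambda>v. gh v * e 0) + complex_of_real a * complex_of_real (v$1) * vector_derivative (\<lambda>y. Sh * e y) (at 0)
          - gh v * e 0 - complex_of_real k * sphere_avg (\<lambda>v. gh v * e 0)"
    using L unfolding L_solution_def by blast
  have E6: "- complex_of_real d * vector_derivative (\<lambda>y. vector_derivative (\<lambda>y. Sh * e y) (at y)) (at 0) + Sh * e 0
          = sphere_avg (\<lambda>v. gh v * e 0)"
    using L unfolding L_solution_def by blast
  have qc: "1 + complex_of_real d * (complex_of_real lam)^2 \<noteq> 0"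
  proof -
    have "complex_of_real (1 + d*lam^2) \<noteq> 0" using q by (simp only: of_real_eq_0_iff)
    thus ?thesis by simp
  qed
  have "Sh * (1 + complex_of_real d * (complex_of_real lam)^2) = \<rho>"
    using E6 unfolding Sg'' g0 e0 \<rho>_def by (simp add: algebra_simps power2_eq_square)
  hence ShS: "Sh = \<rho> * S" unfolding S_def using qc by (simp add: field_simps)
  have ghv: "gh v = \<rho> * ((complex_of_real (1 - k) + \<i> * complex_of_real (a * lam * v$1 / (1 + d * lam^2)))
            / (complex_of_real (1 + k * \<mu>) + \<i> * complex_of_real (k * lam * v$1)))" if v: "v \<in> sphere 0 1" for v
  proof -
    have "complex_of_real k * (complex_of_real \<mu> * gh v + complex_of_real (v$1) * (gh v * (\<i> * complex_of_real lam)))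
        = \<rho> + complex_of_real a * complex_of_real (v$1) * (Sh * (\<i> * complex_of_real lam)) - gh v - complex_of_real k * \<rho>"
      using E5 v unfolding g' Sg' g0 e0 \<rho>_def by simp
    from alg5'[OF this ShS]
    have "gh v * (complex_of_real (1 + k * \<mu>) + \<i> * complex_of_real (k * lam * v$1))
        = \<rho> * (complex_of_real (1 - k) + \<i> * complex_of_real (a * lam * v$1 / (1 + d * lam^2)))"
      unfolding S_def by (simp add: divide_inverse mult_ac)
    then show ?thesis using den[of "v$1"] by (simp add: field_simps)
  qed
  have "\<rho> = sphere_avg (\<lambda>v. \<rho> * ((complex_of_real (1 - k) + \<i> * complex_of_real (a * lam * v$1 / (1 + d * lam^2)))
            / (complex_of_real (1 + k * \<mu>) + \<i> * complex_of_real (k * lam * v$1))))"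
    by (subst \<rho>_def, rule sphere_avg_cong, rule ghv)
  also have "\<dots> = \<rho> * complex_of_real (Jv k d a lam \<mu>)"
    using avg_fr[OF k lam mu1, of \<rho> a d] by simp
  finally have "\<rho> * (complex_of_real (Jv k d a lam \<mu>) - 1) = 0" by (simp add: algebra_simps)
  moreover have "\<rho> \<noteq> 0" using ghv[OF v0(1)] v0(2) by auto
  ultimately show ?thesis by simp
qed


lemma rhs_pos:
  fixes k d l :: real
  assumes k: "k > 0" and d: "d \<ge> 0" and l: "l > 0"
  shows "instab_rhs k d l \<ge> 0"
proof -
  have y: "k * l > 0" using k l by simp
  have t: "arctan (k*l) > 0" "arctan (k*l) < k*l" using y arctan_lt[OF y] by auto
  have "k * l / arctan (k * l) > 1" using t by (simp add: field_simps)
  hence "k / (k * l / arctan (k * l) - 1) > 0" using k by simp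
  moreover have "1 + d * l^2 > 0" using d by (simp add: add_pos_nonneg)
  ultimately show ?thesis unfolding instab_rhs_def by simp
qed

theorem mainTheorem2:
  fixes k d a lam :: real
  assumes "k > 0" and "d \<ge> 0" and "a > 0" and "lam > 0"
    and "a / k > (1 + k / (k * lam / arctan (k * lam) - 1)) * (1 + d * lam^2)"
  shows "(\<exists>\<mu>::real. \<mu> > 0 \<and> dispersion k d a lam \<mu>)
    \<and> (\<forall>\<mu>::real. \<mu> > 0 \<longrightarrow> (dispersion k d a lam \<mu> \<longleftrightarrow> fourier_solution k d a lam (complex_of_real \<mu>)))
    \<and> (a / k > (INF l\<in>{0<..}. instab_rhs k d l) \<longrightarrow> linearly_unstable k d a)
    \<and> a / (k * (1 + d * lam^2)) > 1
    \<and> (d > 0 \<longrightarrow> lam < sqrt ((a / k - 1) / d))"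
proof -
  note k = assms(1) and d = assms(2) and a = assms(3) and lam = assms(4) and hyp = assms(5)
  have mu1: "1 + k * \<mu> > 0" if "\<mu> > 0" for \<mu> using k that by (simp add: add_pos_pos)
  have P1: "\<exists>\<mu>::real. \<mu> > 0 \<and> dispersion k d a lam \<mu>"
    using exists_mu[OF k d a lam hyp] disp_iff[OF k lam mu1] by blast
  have equiv: "dispersion k d a l \<mu> \<longleftrightarrow> fourier_solution k d a l (complex_of_real \<mu>)"
    if l: "l > 0" and mu: "\<mu> > 0" for l \<mu>
    using disp_iff[OF k l mu1[OF mu]] disp_imp_fourier[OF k d a l mu] fourier_imp_disp[OF k d l mu] by blast
  have P3: "a / k > (INF l\<in>{0<..}. instab_rhs k d l) \<longrightarrow> linearly_unstable k d a"
  proof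
    assume inf: "a / k > (INF l\<in>{0<..}. instab_rhs k d l)"
    have bdd: "bdd_below (instab_rhs k d ` {0<..})"
      by (rule bdd_belowI[of _ 0]) (use rhs_pos[OF k d] in auto)
    have ne: "instab_rhs k d ` {0<..} \<noteq> {}" by auto
    have "\<exists>x\<in>instab_rhs k d ` {0<..}. x < a / k" using iffD1[OF cInf_less_iff[OF ne bdd] inf] .
    then obtain l where l: "l > 0" "instab_rhs k d l < a / k" by auto
    obtain \<mu> where mu: "\<mu> > 0" "Jv k d a l \<mu> = 1"
      using exists_mu[OF k d a l(1)] l(2) unfolding instab_rhs_def by blast
    have "fourier_solution k d a l (complex_of_real \<mu>)" by (rule disp_imp_fourier[OF k d a l(1) mu])
    then show "linearly_unstable k d a" unfolding linearly_unstable_def using mu(1) by force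
  qed
  have P4: "a / (k * (1 + d * lam^2)) > 1"
    using beta_facts(1,2)[OF k d a lam hyp] by linarith
  have P5: "d > 0 \<longrightarrow> lam < sqrt ((a / k - 1) / d)"
  proof
    assume dp: "d > 0"
    have q: "k * (1 + d * lam^2) > 0" using k d by (simp add: add_pos_nonneg)
    have "a > k * (1 + d * lam^2)" using P4 q by (simp add: less_divide_eq)
    hence "a / k > 1 + d * lam^2" using k by (subst pos_less_divide_eq[OF k]) (simp add: mult.commute)
    hence "d * lam^2 < a / k - 1" by linarith
    hence "lam^2 < (a / k - 1) / d" by (subst pos_less_divide_eq[OF dp]) (simp add: mult.commute)
    then show "lam < sqrt ((a / k - 1) / d)" by (rule real_less_rsqrt)
  qed
  show ?thesis using P1 equiv[OF lam] P3 P4 P5 by blast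
qed

end
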